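(* Let $V = V_1 \oplus \cdots \oplus V_m$ be a finite-dimensional complex vector space decomposed as a direct sum, with dual decomposition $V^* = V_1^* \oplus \cdots \oplus V_m^*$, and let $T = \mathrm{Sym}(V^* )$, $T_i = \mathrm{Sym}(V_i^* ) \subset T$. Let $d \ge 2$, let $F_i \in S^d V_i$ and $t_i \in V_i^*$ for $i=1,\dots,m$, and let $F = F_1 + \cdots + F_m \in S^d V$. For each $i$, let $J_i \subset T$ be the ideal $$J_i = (F_i^{\perp} : t_i) + (t_i) + (V_1^*, \dots, V_{i-1}^*, V_{i+1}^*, \dots, V_m^* ),$$ where $F_i^\perp$ is the perp ideal of $F_i$ in $T_i$ and $(F_i^\perp : t_i) = \{g \in T_i : t_i g \in F_i^\perp\}$ (all regarded inside $T$ via $T_i \subset T$). Then $$(F^\perp : (t_1, \dots, t_m)) \subset J_1 \cap \cdots \cap J_m .$$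
   Context: For a complex vector space $W$, $S = \mathrm{Sym}(W) = \bigoplus_d S^d W$ and $\mathrm{Sym}(W^* )$ acts on $S$ by differentiation (apolarity action: linear forms in $W^*$ act as derivations). For $F \in S^d W$, the perp ideal is $F^\perp = \{ g \in \mathrm{Sym}(W^* ) : g\cdot F = 0\}$, a homogeneous ideal. For ideals $I, J$, the ideal quotient is $(I : J) = \{g : gJ \subset I\}$; $(F^\perp : (t_1,\dots,t_m))$ is the ideal quotient of $F^\perp$ (the perp ideal of $F$ in $T$) by the ideal generated by $t_1,\dots,t_m$. *)

theory Defs
  imports Complex_Main "HOL-Library.Poly_Mapping"
begin

text \<open>The same type models both S = Sym(V) (variables x_v,
  v a basis of V) and T = Sym(V^*) (dual variables y_v, dual basis).\<close>

type_synonym 'v cpoly = "('v \<Rightarrow>\<^sub>0 nat) \<Rightarrow>\<^sub>0 complex"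

definition var :: "'v \<Rightarrow> 'v cpoly" where
  "var v = Poly_Mapping.single (Poly_Mapping.single v 1) 1"

text \<open>Apolarity: y^alpha acting on c x^beta by differentiation.\<close>
definition diff_mono :: "('v \<Rightarrow>\<^sub>0 nat) \<Rightarrow> ('v \<Rightarrow>\<^sub>0 nat) \<Rightarrow> complex \<Rightarrow> 'v cpoly" where
  "diff_mono \<alpha> \<beta> c =
     (if \<forall>v. Poly_Mapping.lookup \<alpha> v \<le> Poly_Mapping.lookup \<beta> v
      then Poly_Mapping.single (\<beta> - \<alpha>)
             (c * (\<Prod>v\<in>Poly_Mapping.keys \<alpha>. fact (Poly_Mapping.lookup \<beta> v) / fact (Poly_Mapping.lookup \<beta> v - Poly_Mapping.lookup \<alpha> v)))
      else 0)"

definition apolar :: "'v cpoly \<Rightarrow> 'v cpoly \<Rightarrow> 'v cpoly" where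
  "apolar g F = (\<Sum>\<alpha>\<in>Poly_Mapping.keys g. \<Sum>\<beta>\<in>Poly_Mapping.keys F. diff_mono \<alpha> \<beta> (Poly_Mapping.lookup g \<alpha> * Poly_Mapping.lookup F \<beta>))"

definition homogeneous :: "nat \<Rightarrow> 'v cpoly \<Rightarrow> bool" where
  "homogeneous d p \<longleftrightarrow> (\<forall>\<alpha>\<in>Poly_Mapping.keys p. (\<Sum>v\<in>Poly_Mapping.keys \<alpha>. Poly_Mapping.lookup \<alpha> v) = d)"

text \<open>p involves only variables of block i (i.e. p lies in Sym(V_i) resp. Sym(V_i^*)).\<close>
definition in_block :: "('v \<Rightarrow> nat) \<Rightarrow> nat \<Rightarrow> 'v cpoly \<Rightarrow> bool" where
  "in_block blk i p \<longleftrightarrow> (\<forall>\<alpha>\<in>Poly_Mapping.keys p. \<forall>v\<in>Poly_Mapping.keys \<alpha>. blk v = i)"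

definition ideal_gen :: "'a::comm_ring_1 set \<Rightarrow> 'a set" where
  "ideal_gen S = {(\<Sum>a\<in>t. r a * a) | t r. finite t \<and> t \<subseteq> S}"

definition perp :: "'v cpoly \<Rightarrow> 'v cpoly set" where
  "perp F = {g. apolar g F = 0}"

definition perp_block :: "('v \<Rightarrow> nat) \<Rightarrow> nat \<Rightarrow> 'v cpoly \<Rightarrow> 'v cpoly set" where
  "perp_block blk i F = {g. in_block blk i g \<and> apolar g F = 0}"

definition ideal_quot :: "'a::comm_ring_1 set \<Rightarrow> 'a set \<Rightarrow> 'a set" where
  "ideal_quot I J = {g. \<forall>h\<in>J. g * h \<in> I}"

end

theory Submission
  imports Defs
begin

lemma diff_mono_0[simp]: "diff_mono a b 0 = 0"
  by (simp add: diff_mono_def)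

lemma diff_mono_add: "diff_mono a b (x + y) = diff_mono a b x + diff_mono a b y"
  by (simp add: diff_mono_def distrib_right single_add)

lemma apolar_super:
  assumes "finite A" "Poly_Mapping.keys g \<subseteq> A" "finite B" "Poly_Mapping.keys F \<subseteq> B"
  shows "apolar g F = (\<Sum>\<alpha>\<in>A. \<Sum>\<beta>\<in>B. diff_mono \<alpha> \<beta> (Poly_Mapping.lookup g \<alpha> * Poly_Mapping.lookup F \<beta>))"
proof -
  have "apolar g F = (\<Sum>\<alpha>\<in>A. \<Sum>\<beta>\<in>Poly_Mapping.keys F. diff_mono \<alpha> \<beta> (Poly_Mapping.lookup g \<alpha> * Poly_Mapping.lookup F \<beta>))"
    unfolding apolar_def
    by (rule sum.mono_neutral_left) (use assms in \<open>auto simp: in_keys_iff\<close>)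
  also have "\<dots> = (\<Sum>\<alpha>\<in>A. \<Sum>\<beta>\<in>B. diff_mono \<alpha> \<beta> (Poly_Mapping.lookup g \<alpha> * Poly_Mapping.lookup F \<beta>))"
  proof (rule sum.cong[OF refl])
    fix \<alpha> show "(\<Sum>\<beta>\<in>Poly_Mapping.keys F. diff_mono \<alpha> \<beta> (Poly_Mapping.lookup g \<alpha> * Poly_Mapping.lookup F \<beta>)) = (\<Sum>\<beta>\<in>B. diff_mono \<alpha> \<beta> (Poly_Mapping.lookup g \<alpha> * Poly_Mapping.lookup F \<beta>))"
      by (rule sum.mono_neutral_left) (use assms in \<open>auto simp: in_keys_iff\<close>)
  qed
  finally show ?thesis by simp
qed

lemma apolar_add1: "apolar (p + q) F = apolar p F + apolar q F"
proof -
  let ?A = "Poly_Mapping.keys p \<union> Poly_Mapping.keys q"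
  have k: "Poly_Mapping.keys (p+q) \<subseteq> ?A" by (rule keys_add)
  show ?thesis
    apply (subst apolar_super[OF _ k, of "Poly_Mapping.keys F"], simp_all)
    apply (subst apolar_super[of ?A p "Poly_Mapping.keys F"], simp_all)
    apply (subst apolar_super[of ?A q "Poly_Mapping.keys F"], simp_all)
    by (simp add: lookup_add distrib_right diff_mono_add sum.distrib)
qed

lemma apolar_add2: "apolar g (F + G) = apolar g F + apolar g G"
proof -
  let ?B = "Poly_Mapping.keys F \<union> Poly_Mapping.keys G"
  have k: "Poly_Mapping.keys (F+G) \<subseteq> ?B" by (rule keys_add)
  show ?thesis
    apply (subst apolar_super[OF _ _ _ k, of "Poly_Mapping.keys g"], simp_all)
    apply (subst apolar_super[of "Poly_Mapping.keys g" g ?B F], simp_all)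
    apply (subst apolar_super[of "Poly_Mapping.keys g" g ?B G], simp_all)
    by (simp add: lookup_add distrib_left diff_mono_add sum.distrib)
qed

lemma apolar_0_2[simp]: "apolar g 0 = 0" by (simp add: apolar_def)

lemma apolar_sum2: "finite J \<Longrightarrow> apolar g (\<Sum>j\<in>J. F j) = (\<Sum>j\<in>J. apolar g (F j))"
  by (induction J rule: finite_induct) (auto simp: apolar_add2)

lemma apolar_crit:
  assumes "\<And>\<alpha> \<beta>. \<alpha> \<in> Poly_Mapping.keys p \<Longrightarrow> \<beta> \<in> Poly_Mapping.keys q \<Longrightarrow> \<exists>v. Poly_Mapping.lookup \<beta> v < Poly_Mapping.lookup \<alpha> v"
  shows "apolar p q = 0"
  unfolding apolar_def
  by (rule sum.neutral, rule ballI, rule sum.neutral) (auto simp: diff_mono_def dest!: assms not_le_imp_less leD)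

lemma ig_0: "0 \<in> ideal_gen S"
  unfolding ideal_gen_def by (rule CollectI, rule exI[of _ "{}"]) auto

lemma ig_gen: "a \<in> S \<Longrightarrow> r * a \<in> ideal_gen S"
  unfolding ideal_gen_def by (rule CollectI, rule exI[of _ "{a}"], rule exI[of _ "\<lambda>_. r"]) auto

lemma ig_mono: "S \<subseteq> T \<Longrightarrow> x \<in> ideal_gen S \<Longrightarrow> x \<in> ideal_gen T"
  unfolding ideal_gen_def by blast

lemma ig_add: assumes "x \<in> ideal_gen S" "y \<in> ideal_gen S" shows "x + y \<in> ideal_gen S"
proof -
  obtain t1 r1 where x: "x = (\<Sum>a\<in>t1. r1 a * a)" "finite t1" "t1 \<subseteq> S" using assms(1) unfolding ideal_gen_def by blast
  obtain t2 r2 where y: "y = (\<Sum>a\<in>t2. r2 a * a)" "finite t2" "t2 \<subseteq> S" using assms(2) unfolding ideal_gen_def by blast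
  define r where "r a = (if a \<in> t1 then r1 a else 0) + (if a \<in> t2 then r2 a else 0)" for a
  have "x = (\<Sum>a\<in>t1\<union>t2. (if a \<in> t1 then r1 a else 0) * a)"
    unfolding x(1) by (rule sum.mono_neutral_cong_left) (use x y in auto)
  moreover have "y = (\<Sum>a\<in>t1\<union>t2. (if a \<in> t2 then r2 a else 0) * a)"
    unfolding y(1) by (rule sum.mono_neutral_cong_left) (use x y in auto)
  ultimately have "x + y = (\<Sum>a\<in>t1\<union>t2. r a * a)"
    by (simp add: r_def distrib_right sum.distrib)
  thus ?thesis unfolding ideal_gen_def using x y by blast
qed

lemma ig_sum: "finite I \<Longrightarrow> (\<And>i. i \<in> I \<Longrightarrow> f i \<in> ideal_gen S) \<Longrightarrow> sum f I \<in> ideal_gen S"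
  by (induction I rule: finite_induct) (auto intro: ig_0 ig_add)

lemma poly_monoms: "p = (\<Sum>\<alpha>\<in>Poly_Mapping.keys p. Poly_Mapping.single \<alpha> (Poly_Mapping.lookup p \<alpha>))"
  by (rule poly_mapping_eqI) (auto simp: lookup_sum lookup_single when_def in_keys_iff)

lemma monom_split:
  assumes "v \<in> Poly_Mapping.keys \<alpha>"
  shows "Poly_Mapping.single \<alpha> c = (Poly_Mapping.single (\<alpha> - Poly_Mapping.single v 1) c :: 'v cpoly) * var v"
proof -
  have "\<alpha> - Poly_Mapping.single v 1 + Poly_Mapping.single v 1 = \<alpha>"
    using assms by (intro poly_mapping_eqI) (auto simp: lookup_add lookup_minus lookup_single when_def in_keys_iff)
  thus ?thesis by (simp add: var_def mult_single)
qed

lemma keys_sum_single: "Poly_Mapping.keys (\<Sum>\<alpha>\<in>S. Poly_Mapping.single \<alpha> (c \<alpha>)) \<subseteq> S"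
  using keys_sum[of "\<lambda>\<alpha>. Poly_Mapping.single \<alpha> (c \<alpha>)" S] by (auto split: if_splits)

lemma keys_nat_add: "v \<in> Poly_Mapping.keys ((a::'v \<Rightarrow>\<^sub>0 nat) + b) \<longleftrightarrow> v \<in> Poly_Mapping.keys a \<or> v \<in> Poly_Mapping.keys b"
  by (auto simp: in_keys_iff lookup_add)

lemma hom1_var: assumes "homogeneous 1 t" "b \<in> Poly_Mapping.keys t" shows "\<exists>v. v \<in> Poly_Mapping.keys b"
proof (rule ccontr)
  assume "\<nexists>v. v \<in> Poly_Mapping.keys b"
  hence "Poly_Mapping.keys b = {}" by blast
  thus False using assms unfolding homogeneous_def by auto
qed

lemma decomp:
  fixes g :: "'v::finite cpoly"
  shows "\<exists>gi h. g = gi + h \<and> in_block blk i gi \<and>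
     (\<forall>\<alpha>\<in>Poly_Mapping.keys h. \<exists>v\<in>Poly_Mapping.keys \<alpha>. blk v \<noteq> i) \<and>
     h \<in> ideal_gen {var v | v. blk v \<noteq> i}"
proof -
  define S1 where "S1 = {\<alpha>\<in>Poly_Mapping.keys g. \<forall>v\<in>Poly_Mapping.keys \<alpha>. blk v = i}"
  define S2 where "S2 = Poly_Mapping.keys g - S1"
  define gi where "gi = (\<Sum>\<alpha>\<in>S1. Poly_Mapping.single \<alpha> (Poly_Mapping.lookup g \<alpha>))"
  define h where "h = (\<Sum>\<alpha>\<in>S2. Poly_Mapping.single \<alpha> (Poly_Mapping.lookup g \<alpha>))"
  have fin: "finite S1" "finite S2" unfolding S1_def S2_def by auto
  have "g = gi + h"
    apply (subst poly_monoms[of g])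
    unfolding gi_def h_def
    by (subst sum.union_disjoint[symmetric]) (use fin in \<open>auto simp: S2_def S1_def intro: sum.cong\<close>)
  moreover have "in_block blk i gi"
    unfolding in_block_def gi_def using keys_sum_single[of _ S1] S1_def by blast
  moreover have "\<forall>\<alpha>\<in>Poly_Mapping.keys h. \<exists>v\<in>Poly_Mapping.keys \<alpha>. blk v \<noteq> i"
    unfolding h_def using keys_sum_single[of _ S2] unfolding S2_def S1_def by blast
  moreover have "h \<in> ideal_gen {var v | v. blk v \<noteq> i}"
    unfolding h_def
  proof (rule ig_sum[OF fin(2)])
    fix \<alpha> assume "\<alpha> \<in> S2"
    then obtain v where v: "v \<in> Poly_Mapping.keys \<alpha>" "blk v \<noteq> i" unfolding S2_def S1_def by blast
    show "Poly_Mapping.single \<alpha> (Poly_Mapping.lookup g \<alpha>) \<in> ideal_gen {var v | v. blk v \<noteq> i}"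
      by (subst monom_split[OF v(1)]) (rule ig_gen, use v in blast)
  qed
  ultimately show ?thesis by blast
qed

lemma keys_mult_obtain:
  assumes "\<alpha> \<in> Poly_Mapping.keys (p * q)"
  obtains a b where "\<alpha> = a + b" "a \<in> Poly_Mapping.keys p" "b \<in> Poly_Mapping.keys q"
proof -
  have "\<alpha> \<in> {a + b | a b. a \<in> Poly_Mapping.keys p \<and> b \<in> Poly_Mapping.keys q}"
    using keys_mult[of p q] assms by (rule subsetD)
  then show ?thesis using that by (auto simp only: mem_Collect_eq)
qed
lemma other_block_zero:
  assumes "homogeneous 1 ti" "in_block blk i ti" "in_block blk j Fj" "j \<noteq> i"
  shows "apolar (p * ti) Fj = 0"
proof (rule apolar_crit)
  fix \<alpha> \<beta> assume a: "\<alpha> \<in> Poly_Mapping.keys (p * ti)" and b: "\<beta> \<in> Poly_Mapping.keys Fj"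
  obtain a1 b1 where ab: "\<alpha> = a1 + b1" "b1 \<in> Poly_Mapping.keys ti"
    by (rule keys_mult_obtain[OF a]) blast
  obtain v where v: "v \<in> Poly_Mapping.keys b1" using hom1_var[OF assms(1) ab(2)] by blast
  have "blk v = i" using assms(2) ab(2) v unfolding in_block_def by auto
  hence "v \<notin> Poly_Mapping.keys \<beta>" using assms(3,4) b unfolding in_block_def by auto
  moreover have "v \<in> Poly_Mapping.keys \<alpha>" using ab(1) v by (simp add: keys_nat_add)
  ultimately show "\<exists>v. Poly_Mapping.lookup \<beta> v < Poly_Mapping.lookup \<alpha> v" apply (intro exI[of _ v])
    by (auto simp: in_keys_iff)
qed

lemma h_zero:
  assumes "\<forall>\<alpha>\<in>Poly_Mapping.keys h. \<exists>v\<in>Poly_Mapping.keys \<alpha>. blk v \<noteq> i" "in_block blk i Fi"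
  shows "apolar (h * ti) Fi = 0"
proof (rule apolar_crit)
  fix \<alpha> \<beta> assume a: "\<alpha> \<in> Poly_Mapping.keys (h * ti)" and b: "\<beta> \<in> Poly_Mapping.keys Fi"
  obtain a1 b1 where ab: "\<alpha> = a1 + b1" "a1 \<in> Poly_Mapping.keys h"
    by (rule keys_mult_obtain[OF a]) blast
  obtain v where v: "v \<in> Poly_Mapping.keys a1" "blk v \<noteq> i" using assms(1) ab(2) by blast
  hence "v \<notin> Poly_Mapping.keys \<beta>" using assms(2) b unfolding in_block_def by auto
  moreover have "v \<in> Poly_Mapping.keys \<alpha>" using ab(1) v by (simp add: keys_nat_add)
  ultimately show "\<exists>v. Poly_Mapping.lookup \<beta> v < Poly_Mapping.lookup \<alpha> v" apply (intro exI[of _ v])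
    by (auto simp: in_keys_iff)
qed

lemma in_block_mult: "in_block blk i p \<Longrightarrow> in_block blk i q \<Longrightarrow> in_block blk i (p * q)"
  unfolding in_block_def
proof (intro ballI)
  fix \<alpha> v assume prems: "\<forall>\<alpha>\<in>Poly_Mapping.keys p. \<forall>v\<in>Poly_Mapping.keys \<alpha>. blk v = i" "\<forall>\<alpha>\<in>Poly_Mapping.keys q. \<forall>v\<in>Poly_Mapping.keys \<alpha>. blk v = i"
     "\<alpha> \<in> Poly_Mapping.keys (p * q)" "v \<in> Poly_Mapping.keys \<alpha>"
  then obtain a b where "\<alpha> = a + b" "a \<in> Poly_Mapping.keys p" "b \<in> Poly_Mapping.keys q"
    using keys_mult_obtain[OF prems(3)] by blast
  with \<open>v \<in> Poly_Mapping.keys \<alpha>\<close> have "v \<in> Poly_Mapping.keys a \<or> v \<in> Poly_Mapping.keys b" by (simp add: keys_nat_add)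
  thus "blk v = i" using \<open>a \<in> Poly_Mapping.keys p\<close> \<open>b \<in> Poly_Mapping.keys q\<close> prems by auto
qed

theorem mainTheorem1:
  fixes blk :: "'v::finite \<Rightarrow> nat" and m d :: nat
    and Fs :: "nat \<Rightarrow> 'v cpoly" and t :: "nat \<Rightarrow> 'v cpoly"
  assumes blk_range: "\<forall>v. blk v < m"
    and d: "d \<ge> 2"
    and Fs: "\<forall>i<m. homogeneous d (Fs i) \<and> in_block blk i (Fs i)"
    and t: "\<forall>i<m. homogeneous 1 (t i) \<and> in_block blk i (t i)"
  shows "ideal_quot (perp (\<Sum>i<m. Fs i)) (ideal_gen (t ` {..<m}))
     \<subseteq> (\<Inter>i<m. ideal_gen
            ({g. in_block blk i g \<and> t i * g \<in> perp_block blk i (Fs i)}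
             \<union> {t i} \<union> {var v | v. blk v \<noteq> i}))"
proof (intro subsetI INT_I)
  fix g i assume g: "g \<in> ideal_quot (perp (\<Sum>i<m. Fs i)) (ideal_gen (t ` {..<m}))" and i: "i \<in> {..<m}"
  have "1 * t i \<in> ideal_gen (t ` {..<m})" using i by (intro ig_gen) auto
  hence "apolar (g * t i) (\<Sum>i<m. Fs i) = 0" using g unfolding ideal_quot_def perp_def by auto
  moreover have "(\<Sum>j<m. Fs j) = Fs i + (\<Sum>j\<in>{..<m}-{i}. Fs j)"
    using i by (simp add: sum.remove)
  moreover have "apolar (g * t i) (\<Sum>j\<in>{..<m}-{i}. Fs j) = 0"
  proof -
    have "\<forall>j\<in>{..<m}-{i}. apolar (g * t i) (Fs j) = 0"
    proof
      fix j assume j: "j \<in> {..<m}-{i}"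
      show "apolar (g * t i) (Fs j) = 0"
        by (rule other_block_zero[of _ blk i]) (use Fs t i j in auto)
    qed
    thus ?thesis by (simp add: apolar_sum2)
  qed
  ultimately have A: "apolar (g * t i) (Fs i) = 0" by (metis apolar_add2 add.right_neutral)
  obtain gi h where dec: "g = gi + h" "in_block blk i gi"
     "\<forall>\<alpha>\<in>Poly_Mapping.keys h. \<exists>v\<in>Poly_Mapping.keys \<alpha>. blk v \<noteq> i"
     "h \<in> ideal_gen {var v | v. blk v \<noteq> i}" using decomp[of g blk i] by blast
  have "apolar (h * t i) (Fs i) = 0" using h_zero[OF dec(3)] Fs i by blast
  with A have "apolar (gi * t i) (Fs i) = 0" by (simp add: dec(1) distrib_right apolar_add1)
  hence "t i * gi \<in> perp_block blk i (Fs i)"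
  proof -
    have "in_block blk i (t i * gi)" using in_block_mult[OF _ dec(2), of "t i"] t i by blast
    moreover have "apolar (t i * gi) (Fs i) = 0" using \<open>apolar (gi * t i) (Fs i) = 0\<close> by (simp add: mult.commute)
    ultimately show ?thesis unfolding perp_block_def by blast
  qed
  hence "1 * gi \<in> ideal_gen ({g. in_block blk i g \<and> t i * g \<in> perp_block blk i (Fs i)}
             \<union> {t i} \<union> {var v | v. blk v \<noteq> i})"
    using dec(2) by (intro ig_gen) blast
  moreover have "h \<in> ideal_gen ({g. in_block blk i g \<and> t i * g \<in> perp_block blk i (Fs i)}
             \<union> {t i} \<union> {var v | v. blk v \<noteq> i})"
    by (rule ig_mono[OF _ dec(4)]) blast
  ultimately show "g \<in> ideal_gen ({g. in_block blk i g \<and> t i * g \<in> perp_block blk i (Fs i)}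
             \<union> {t i} \<union> {var v | v. blk v \<noteq> i})"
    using ig_add[of "1 * gi" _ h] dec(1) by simp
qed

end
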